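(* Let $r\ge2$. A length function $\ell=(\ell^1,\dots,\ell^r)\in\mathbb R_{>0}^r$ on the rose $\mathcal R_r$ has $\mathfrak h_{\mathcal R_r}(\ell)=1$ if and only if $$\overline F_r(\ell):=\sum_{S\subseteq[r]}(1-2|S|)\exp(-\ell^S)=0,$$ where $\ell^S=\sum_{k\in S}\ell^k$. That is, $\mathcal M^1(\mathcal R_r)=\{\ell\in\mathbb R^r_{>0}:\overline F_r(\ell)=0\}$.
   Context: $\mathcal R_r$ is the rose with one vertex and $r$ loop edges identified with $[r]=\{1,\dots,r\}$; a length function assigns $\ell^i>0$ to edge $i$. The entropy is $\mathfrak h_{\mathcal R_r}(\ell)=\lim_{t\to\infty}\frac1t\log\#\{\gamma:\ell(\gamma)\le t\}$, where $\gamma$ ranges over based circuits: edge paths $(e_1,\dots,e_n)$ in the oriented edges (each petal with two orientations $e,\bar e$) with $e_{k+1}\ne\bar e_k$ and $e_n\ne\bar e_1$, and $\ell(\gamma)$ is the sum of the lengths of the edges traversed. $\mathcal M^1(\mathcal R_r)=\{\ell:\mathfrak h_{\mathcal R_r}(\ell)=1\}$. *)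

theory Defs
  imports Complex_Main
begin

text \<open>Oriented edges of the rose R_r: a petal index i and an orientation flag.\<close>
type_synonym oedge = "nat \<times> bool"

definition edge_inv :: "oedge \<Rightarrow> oedge" where
  "edge_inv e = (fst e, \<not> snd e)"

definition based_circuit :: "nat \<Rightarrow> oedge list \<Rightarrow> bool" where
  "based_circuit r \<gamma> \<longleftrightarrow>
     \<gamma> \<noteq> [] \<and> (\<forall>e\<in>set \<gamma>. fst e \<in> {1..r}) \<and>
     (\<forall>k. Suc k < length \<gamma> \<longrightarrow> \<gamma> ! Suc k \<noteq> edge_inv (\<gamma> ! k)) \<and>
     last \<gamma> \<noteq> edge_inv (hd \<gamma>)"

definition path_length :: "(nat \<Rightarrow> real) \<Rightarrow> oedge list \<Rightarrow> real" where
  "path_length l \<gamma> = (\<Sum>e\<leftarrow>\<gamma>. l (fst e))"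

definition circuit_count :: "nat \<Rightarrow> (nat \<Rightarrow> real) \<Rightarrow> real \<Rightarrow> nat" where
  "circuit_count r l t = card {\<gamma>. based_circuit r \<gamma> \<and> path_length l \<gamma> \<le> t}"

definition rose_entropy :: "nat \<Rightarrow> (nat \<Rightarrow> real) \<Rightarrow> real" where
  "rose_entropy r l = Lim at_top (\<lambda>t. ln (real (circuit_count r l t)) / t)"

definition Fbar :: "nat \<Rightarrow> (nat \<Rightarrow> real) \<Rightarrow> real" where
  "Fbar r l = (\<Sum>S\<in>Pow {1..r}. (1 - 2 * real (card S)) * exp (- (\<Sum>k\<in>S. l k)))"

end

theory Submission
  imports Defs "HOL-Real_Asymp.Real_Asymp"
begin


lemma powsum_P:
  fixes x :: "nat \<Rightarrow> real"
  assumes "finite A"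
  shows "(\<Sum>S\<in>Pow A. \<Prod>k\<in>S. x k) = (\<Prod>k\<in>A. 1 + x k)"
  using assms
proof (induction A rule: finite_induct)
  case empty then show ?case by simp
next
  case (insert a A)
  have inj: "inj_on (insert a) (Pow A)" using insert.hyps by (auto simp: inj_on_def)
  have "(\<Sum>S\<in>Pow (insert a A). \<Prod>k\<in>S. x k) = (\<Sum>S\<in>Pow A. \<Prod>k\<in>S. x k) + (\<Sum>S\<in>insert a ` Pow A. \<Prod>k\<in>S. x k)"
    unfolding Pow_insert by (rule sum.union_disjoint) (use insert.hyps in auto)
  also have "(\<Sum>S\<in>insert a ` Pow A. \<Prod>k\<in>S. x k) = (\<Sum>S\<in>Pow A. x a * (\<Prod>k\<in>S. x k))"
    apply (subst sum.reindex[OF inj]) apply (rule sum.cong, simp)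
    subgoal for S proof -
      assume "S \<in> Pow A" then have "finite S" "a \<notin> S" using insert.hyps finite_subset[of S A] by auto
      then show ?thesis by simp qed done
  finally show ?case using insert by (simp add: sum_distrib_left[symmetric] algebra_simps)
qed

lemma powsum_Q:
  fixes x :: "nat \<Rightarrow> real"
  assumes "finite A"
  shows "(\<Sum>S\<in>Pow A. real (card S) * (\<Prod>k\<in>S. x k)) = (\<Sum>j\<in>A. x j * (\<Prod>k\<in>A-{j}. 1 + x k))"
  using assms
proof (induction A rule: finite_induct)
  case empty then show ?case by simp
next
  case (insert a A)
  have inj: "inj_on (insert a) (Pow A)" using insert.hyps by (auto simp: inj_on_def)
  have "(\<Sum>S\<in>Pow (insert a A). real (card S) * (\<Prod>k\<in>S. x k)) = (\<Sum>S\<in>Pow A. real (card S) * (\<Prod>k\<in>S. x k)) + (\<Sum>S\<in>insert a ` Pow A. real (card S) * (\<Prod>k\<in>S. x k))"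
    unfolding Pow_insert by (rule sum.union_disjoint) (use insert.hyps in auto)
  also have "(\<Sum>S\<in>insert a ` Pow A. real (card S) * (\<Prod>k\<in>S. x k)) = (\<Sum>S\<in>Pow A. x a * (real (card S) * (\<Prod>k\<in>S. x k)) + x a * (\<Prod>k\<in>S. x k))"
    apply (subst sum.reindex[OF inj]) apply (rule sum.cong, simp)
    subgoal for S proof -
      assume "S \<in> Pow A" then have "finite S" "a \<notin> S" using insert.hyps finite_subset[of S A] by auto
      then show ?thesis by (simp add: algebra_simps) qed done
  moreover have "(\<Sum>j\<in>insert a A. x j * (\<Prod>k\<in>insert a A-{j}. 1 + x k)) = x a * (\<Prod>k\<in>A. 1 + x k) + (1 + x a) * (\<Sum>j\<in>A. x j * (\<Prod>k\<in>A-{j}. 1 + x k))"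
  proof -
    have "(\<Sum>j\<in>A. x j * (\<Prod>k\<in>insert a A-{j}. 1 + x k)) = (\<Sum>j\<in>A. (1 + x a) * (x j * (\<Prod>k\<in>A-{j}. 1 + x k)))"
    proof (rule sum.cong)
      fix j assume "j \<in> A"
      then have "insert a A - {j} = insert a (A - {j})" "a \<notin> A - {j}" using insert.hyps by auto
      then show "x j * (\<Prod>k\<in>insert a A-{j}. 1 + x k) = (1 + x a) * (x j * (\<Prod>k\<in>A-{j}. 1 + x k))"
        using insert.hyps by simp
    qed simp
    moreover have "insert a A - {a} = A" using insert.hyps by auto
    ultimately show ?thesis using insert.hyps by (simp add: sum_distrib_left)
  qed
  ultimately show ?case using insert powsum_P[OF insert.hyps(1), of x]
    by (simp add: sum.distrib sum_distrib_left[symmetric] algebra_simps)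
qed

lemma Fbar_iff:
  assumes "\<forall>i\<in>{1..r}. l i > 0"
  shows "Fbar r l = 0 \<longleftrightarrow> (\<Sum>k\<in>{1..r}. 2 * exp (- l k) / (1 + exp (- l k))) = 1"
proof -
  let ?x = "\<lambda>k. exp (- l k)"
  let ?A = "{1..r}"
  have "Fbar r l = (\<Sum>S\<in>Pow ?A. (\<Prod>k\<in>S. ?x k) - 2 * (real (card S) * (\<Prod>k\<in>S. ?x k)))"
    unfolding Fbar_def
  proof (rule sum.cong)
    fix S assume "S \<in> Pow ?A"
    then have "finite S" by (auto intro: finite_subset)
    then have "exp (- (\<Sum>k\<in>S. l k)) = (\<Prod>k\<in>S. ?x k)" by (simp add: exp_sum[symmetric] sum_negf)
    then show "(1 - 2 * real (card S)) * exp (- (\<Sum>k\<in>S. l k)) = (\<Prod>k\<in>S. ?x k) - 2 * (real (card S) * (\<Prod>k\<in>S. ?x k))"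
      by (simp add: algebra_simps)
  qed simp
  also have "\<dots> = (\<Prod>k\<in>?A. 1 + ?x k) - 2 * (\<Sum>j\<in>?A. ?x j * (\<Prod>k\<in>?A-{j}. 1 + ?x k))"
    by (simp add: sum_subtractf sum_distrib_left[symmetric] powsum_P powsum_Q)
  also have "(\<Sum>j\<in>?A. ?x j * (\<Prod>k\<in>?A-{j}. 1 + ?x k)) = (\<Prod>k\<in>?A. 1 + ?x k) * (\<Sum>j\<in>?A. ?x j / (1 + ?x j))"
    unfolding sum_distrib_left
  proof (rule sum.cong)
    fix j assume "j \<in> ?A"
    then have "(\<Prod>k\<in>?A. 1 + ?x k) = (1 + ?x j) * (\<Prod>k\<in>?A-{j}. 1 + ?x k)" by (simp add: prod.remove)
    then show "?x j * (\<Prod>k\<in>?A-{j}. 1 + ?x k) = (\<Prod>k\<in>?A. 1 + ?x k) * (?x j / (1 + ?x j))"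
    proof -
      have nz: "1 + ?x j \<noteq> 0" by (smt (verit) exp_gt_zero)
      show ?thesis unfolding \<open>(\<Prod>k\<in>?A. 1 + ?x k) = (1 + ?x j) * (\<Prod>k\<in>?A-{j}. 1 + ?x k)\<close>
        using nz by (simp add: field_simps)
    qed
  qed simp
  finally have F: "Fbar r l = (\<Prod>k\<in>?A. 1 + ?x k) * (1 - (\<Sum>k\<in>?A. 2 * ?x k / (1 + ?x k)))"
    by (simp add: sum_distrib_left algebra_simps)
  have "(\<Prod>k\<in>?A. 1 + ?x k) > 0" by (rule prod_pos) (auto intro: add_pos_pos)
  then have nz: "(\<Prod>k\<in>?A. 1 + ?x k) \<noteq> 0" by (rule less_imp_neq[symmetric])
  have "Fbar r l = 0 \<longleftrightarrow> 1 - (\<Sum>k\<in>?A. 2 * ?x k / (1 + ?x k)) = 0" unfolding F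
    by (simp only: mult_eq_0_iff) (use nz in blast)
  then show ?thesis by linarith
qed


definition Eset :: "nat \<Rightarrow> oedge set" where "Eset r = {1..r} \<times> UNIV"

fun red :: "oedge \<Rightarrow> oedge list \<Rightarrow> bool" where
  "red a [] = True"
| "red a (e # \<eta>) = (e \<noteq> edge_inv a \<and> red e \<eta>)"

definition Rset :: "nat \<Rightarrow> (nat \<Rightarrow> real) \<Rightarrow> oedge \<Rightarrow> real \<Rightarrow> oedge list set" where
  "Rset r l a s = {\<eta>. red a \<eta> \<and> set \<eta> \<subseteq> Eset r \<and> path_length l \<eta> \<le> s}"

lemma path_length_simps[simp]: "path_length l [] = 0" "path_length l (e # \<eta>) = l (fst e) + path_length l \<eta>"
  "path_length l (\<eta> @ \<zeta>) = path_length l \<eta> + path_length l \<zeta>"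
  by (simp_all add: path_length_def)

lemma finite_Eset[simp]: "finite (Eset r)" by (simp add: Eset_def)
lemma card_Eset: "card (Eset r) = 2 * r" by (simp add: Eset_def card_cartesian_product)

lemma path_length_nonneg:
  assumes "\<forall>i\<in>{1..r}. l i > 0" "set \<eta> \<subseteq> Eset r"
  shows "path_length l \<eta> \<ge> 0"
  using assms(2)
proof (induction \<eta>)
  case Nil then show ?case by simp
next
  case (Cons e \<eta>) then have "l (fst e) > 0" using assms(1) by (auto simp: Eset_def mem_Times_iff)
  then show ?case using Cons by simp
qed

lemma Rset_neg:
  assumes "\<forall>i\<in>{1..r}. l i > 0" "s < 0" shows "Rset r l a s = {}"
  using path_length_nonneg[OF assms(1)] assms(2) unfolding Rset_def by fastforce

lemma Rset_rec:
  assumes "0 \<le> s"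
  shows "Rset r l a s = insert [] (\<Union>e\<in>{e\<in>Eset r. e \<noteq> edge_inv a}. Cons e ` Rset r l e (s - l (fst e)))"
proof (rule set_eqI)
  fix \<eta> show "\<eta> \<in> Rset r l a s \<longleftrightarrow> \<eta> \<in> insert [] (\<Union>e\<in>{e\<in>Eset r. e \<noteq> edge_inv a}. Cons e ` Rset r l e (s - l (fst e)))"
    using assms by (cases \<eta>) (auto simp: Rset_def algebra_simps image_iff)
qed

lemma step_induct:
  fixes d :: real assumes "d > 0" and neg: "\<And>s. s < 0 \<Longrightarrow> P s"
    and step: "\<And>s. 0 \<le> s \<Longrightarrow> (\<And>s'. s' \<le> s - d \<Longrightarrow> P s') \<Longrightarrow> P s"
  shows "P s"
proof -
  have "\<forall>s. s < real n * d \<longrightarrow> P s" for n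
  proof (induction n)
    case 0 then show ?case using neg by simp
  next
    case (Suc n) show ?case
    proof (intro allI impI)
      fix s assume s: "s < real (Suc n) * d"
      show "P s"
      proof (cases "s < 0")
        case True then show ?thesis by (rule neg)
      next
        case False
        show ?thesis
        proof (rule step)
          show "0 \<le> s" using False by simp
          fix s' assume "s' \<le> s - d" then have "s' < real n * d" using s by (simp add: algebra_simps)
          then show "P s'" using Suc.IH by blast
        qed
      qed
    qed
  qed
  moreover obtain n where "s / d < real n" using reals_Archimedean2 by blast
  then have "s < real n * d" using \<open>d>0\<close> by (simp add: field_simps)
  ultimately show ?thesis by blast
qed

lemma card_Rset_rec:
  assumes "0 \<le> s" and fin: "\<And>e. e \<in> Eset r \<Longrightarrow> finite (Rset r l e (s - l (fst e)))"
  shows "finite (Rset r l a s) \<and> card (Rset r l a s) = 1 + (\<Sum>e\<in>{e\<in>Eset r. e \<noteq> edge_inv a}. card (Rset r l e (s - l (fst e))))"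
proof -
  let ?E = "{e\<in>Eset r. e \<noteq> edge_inv a}"
  let ?U = "\<Union>e\<in>?E. Cons e ` Rset r l e (s - l (fst e))"
  have fE: "finite ?E" by simp
  have fU: "finite ?U" using fin by auto
  have "card ?U = (\<Sum>e\<in>?E. card (Cons e ` Rset r l e (s - l (fst e))))"
    by (rule card_UN_disjoint) (use fin in auto)
  also have "\<dots> = (\<Sum>e\<in>?E. card (Rset r l e (s - l (fst e))))"
    by (rule sum.cong) (auto simp: card_image)
  finally have cU: "card ?U = \<dots>" .
  have "[] \<notin> ?U" by auto
  then show ?thesis unfolding Rset_rec[OF assms(1), of r l a] using fU cU by simp
qed



lemma bounds:
  fixes r :: nat and l :: "nat \<Rightarrow> real" and h d s :: real
  assumes pos: "\<forall>i\<in>{1..r}. l i > 0" and r1: "r \<ge> 1" and d: "d > 0" "\<forall>i\<in>{1..r}. d \<le> l i" and h: "h > 0"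
    and hyp: "(\<Sum>k\<in>{1..r}. 2 * exp (- h * l k) / (1 + exp (- h * l k))) = 1"
  shows "\<forall>a\<in>Eset r. finite (Rset r l a s) \<and>
     1 / (2 * r) * (1 / (1 + exp (- h * l (fst a)))) * (exp (h * s) - 1) \<le> real (card (Rset r l a s)) \<and>
     (s \<ge> 0 \<longrightarrow> real (card (Rset r l a s)) \<le> 2 * (1 + s / d) * exp (h * s) * (1 / (1 + exp (- h * l (fst a)))))"
proof -
  define x where "x k = exp (- h * l k)" for k
  define v where "v k = 1 / (1 + x k)" for k
  define w where "w k = x k / (1 + x k)" for k
  define K where "K = 1 / (2 * real r)"
  have xpos: "x k > 0" for k by (simp add: x_def)
  have vpos: "v k > 0" for k using xpos[of k] by (simp add: v_def)
  have vle1: "v k \<le> 1" for k using xpos[of k] by (simp add: v_def)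
  have wv: "w k = x k * v k" for k by (simp add: w_def v_def)
  have vw: "v k + w k = 1" for k using xpos[of k] by (simp add: w_def v_def field_simps)
  have vhalf: "v k \<ge> 1/2" if "k \<in> {1..r}" for k
  proof -
    have "0 < l k" using pos that by auto
    then have "x k \<le> 1" using h by (simp add: x_def)
    then show ?thesis using xpos[of k] by (simp add: v_def field_simps)
  qed
  have Kpos: "K > 0" using r1 by (simp add: K_def)
  have EinvE: "edge_inv a \<in> Eset r" if "a \<in> Eset r" for a using that by (auto simp: Eset_def edge_inv_def)
  have Efst: "fst e \<in> {1..r}" if "e \<in> Eset r" for e using that by (auto simp: Eset_def)
  have sumE: "(\<Sum>e\<in>Eset r. w (fst e)) = 1"
  proof -
    have "(\<Sum>e\<in>Eset r. w (fst e)) = (\<Sum>k\<in>{1..r}. \<Sum>b\<in>(UNIV::bool set). w k)"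
      unfolding Eset_def sum.cartesian_product by (simp add: split_def)
    also have "\<dots> = (\<Sum>k\<in>{1..r}. 2 * w k)" by (simp add: UNIV_bool)
    also have "\<dots> = 1" using hyp by (simp add: w_def x_def)
    finally show ?thesis .
  qed
  have eig: "(\<Sum>e\<in>{e\<in>Eset r. e \<noteq> edge_inv a}. w (fst e)) = v (fst a)" if "a \<in> Eset r" for a
  proof -
    have "{e\<in>Eset r. e \<noteq> edge_inv a} = Eset r - {edge_inv a}" by auto
    moreover have "(\<Sum>e\<in>Eset r. w (fst e)) = w (fst (edge_inv a)) + (\<Sum>e\<in>Eset r - {edge_inv a}. w (fst e))"
      using EinvE[OF that] by (simp add: sum.remove)
    ultimately show ?thesis using sumE vw[of "fst a"] by (simp add: edge_inv_def)
  qed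
  have expd: "exp (h * (s - l k)) = exp (h * s) * x k" for s k
    by (simp add: x_def algebra_simps exp_diff exp_minus field_simps)
  show ?thesis
  proof (induction s rule: step_induct[OF d(1)])
    case (1 s)
    have "h * s < 0" using h 1 by (simp add: mult_pos_neg)
    then have e: "exp (h * s) - 1 \<le> 0" by simp
    have "K * v k * (exp (h * s) - 1) \<le> 0" for k
      using Kpos vpos[of k] e by (intro mult_nonneg_nonpos) auto
    then show ?case using Rset_neg[OF pos 1] 1 by (simp add: K_def v_def x_def)
  next
    case (2 s)
    note IH = "2"(2)
    show ?case
    proof
      fix a assume a: "a \<in> Eset r"
      let ?E = "{e\<in>Eset r. e \<noteq> edge_inv a}"
      let ?c = "\<lambda>e. real (card (Rset r l e (s - l (fst e))))"
      have ld: "s - l (fst e) \<le> s - d" if "e \<in> Eset r" for e using d(2) Efst[OF that] by auto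
      have IHe: "finite (Rset r l e (s - l (fst e))) \<and>
         K * v (fst e) * (exp (h * (s - l (fst e))) - 1) \<le> ?c e \<and>
         (s - l (fst e) \<ge> 0 \<longrightarrow> ?c e \<le> 2 * (1 + (s - l (fst e)) / d) * exp (h * (s - l (fst e))) * v (fst e))"
        if "e \<in> Eset r" for e
        using IH[OF ld[OF that]] that by (simp add: K_def v_def x_def)
      from card_Rset_rec[OF "2"(1), of r l, OF conjunct1[OF IHe]]
      have fin: "finite (Rset r l a s)" and cr: "real (card (Rset r l a s)) = 1 + (\<Sum>e\<in>?E. ?c e)"
        by (auto simp del: of_nat_sum simp add: of_nat_sum[symmetric])
      have low: "K * v (fst a) * (exp (h * s) - 1) \<le> real (card (Rset r l a s))"
      proof -
        have L1: "(\<Sum>e\<in>?E. K * (exp (h * s) * w (fst e) - v (fst e))) \<le> (\<Sum>e\<in>?E. ?c e)"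
        proof (rule sum_mono)
          fix e assume "e \<in> ?E"
          then show "K * (exp (h * s) * w (fst e) - v (fst e)) \<le> ?c e"
            using IHe[of e, unfolded expd] by (simp add: wv algebra_simps)
        qed
        moreover have L2: "(\<Sum>e\<in>?E. K * (exp (h * s) * w (fst e) - v (fst e))) =
           K * exp (h * s) * v (fst a) - K * (\<Sum>e\<in>?E. v (fst e))"
        proof -
          have "(\<Sum>e\<in>?E. exp (h * s) * w (fst e)) = exp (h * s) * v (fst a)"
            using eig[OF a] by (simp add: sum_distrib_left[symmetric])
          then show ?thesis by (simp add: sum_subtractf sum_distrib_left[symmetric] algebra_simps)
        qed
        moreover have "(\<Sum>e\<in>?E. v (fst e)) \<le> 2 * real r"
        proof -
          have "(\<Sum>e\<in>?E. v (fst e)) \<le> (\<Sum>e\<in>Eset r. v (fst e))"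
            by (rule sum_mono2) (auto intro: less_imp_le[OF vpos])
          also have "\<dots> \<le> (\<Sum>e\<in>Eset r. 1)" by (rule sum_mono) (rule vle1)
          finally show ?thesis by (simp add: card_Eset)
        qed
        moreover have "K * (2 * real r) = 1" using r1 by (simp add: K_def)
        moreover have "K * v (fst a) \<ge> 0" using Kpos vpos[of "fst a"] by simp
        ultimately have "K * (\<Sum>e\<in>?E. v (fst e)) \<le> 1" by (metis Kpos less_imp_le mult_left_mono)
        moreover have "K * v (fst a) * (exp (h * s) - 1) = K * exp (h * s) * v (fst a) - K * v (fst a)"
          by (simp add: algebra_simps)
        moreover have "K * v (fst a) \<ge> 0" using Kpos vpos[of "fst a"] by simp
        ultimately show ?thesis unfolding cr using L1 L2 by linarith
      qed
      have up: "real (card (Rset r l a s)) \<le> 2 * (1 + s / d) * exp (h * s) * v (fst a)"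
      proof -
        have "(\<Sum>e\<in>?E. ?c e) \<le> (\<Sum>e\<in>?E. 2 * (s / d) * exp (h * s) * w (fst e))"
        proof (rule sum_mono)
          fix e assume e: "e \<in> ?E"
          have nn: "0 \<le> 2 * (s / d) * exp (h * s) * w (fst e)"
            using "2"(1) d(1) xpos[of "fst e"] by (simp add: w_def)
          show "?c e \<le> 2 * (s / d) * exp (h * s) * w (fst e)"
          proof (cases "s - l (fst e) < 0")
            case True then show ?thesis using Rset_neg[OF pos True] nn by simp
          next
            case False
            then have c1: "?c e \<le> 2 * (1 + (s - l (fst e)) / d) * (exp (h * s) * w (fst e))"
              using IHe[of e, unfolded expd] e by (simp add: wv algebra_simps)
            have "1 + (s - l (fst e)) / d \<le> s / d"
              using d Efst[of e] e by (simp add: field_simps)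
            have "2 * (1 + (s - l (fst e)) / d) * (exp (h * s) * w (fst e)) \<le> 2 * (s / d) * (exp (h * s) * w (fst e))"
            proof (rule mult_right_mono)
              show "2 * (1 + (s - l (fst e)) / d) \<le> 2 * (s / d)" using \<open>1 + (s - l (fst e)) / d \<le> s / d\<close> by (intro mult_left_mono) simp_all
              show "0 \<le> exp (h * s) * w (fst e)" using xpos[of "fst e"] by (simp add: w_def)
            qed
            then show ?thesis using c1 by simp
          qed
        qed
        also have "\<dots> = 2 * (s / d) * exp (h * s) * v (fst a)"
          using eig[OF a] by (simp only: sum_distrib_left[symmetric])
        finally have s1: "(\<Sum>e\<in>?E. ?c e) \<le> 2 * (s / d) * exp (h * s) * v (fst a)" .
        have "1 \<le> 2 * exp (h * s) * v (fst a)"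
        proof -
          have "1 \<le> exp (h * s)" using h "2"(1) by simp
          moreover have "1 \<le> 2 * v (fst a)" using vhalf[OF Efst[OF a]] by simp
          ultimately have "1 * 1 \<le> exp (h * s) * (2 * v (fst a))" by (intro mult_mono) auto
          then show ?thesis by (simp add: mult.assoc mult.left_commute)
        qed
        moreover have "2 * (1 + s / d) * exp (h * s) * v (fst a) = 2 * exp (h * s) * v (fst a) + 2 * (s / d) * exp (h * s) * v (fst a)"
          by (simp add: algebra_simps)
        ultimately show ?thesis unfolding cr using s1 by linarith
      qed
      show "finite (Rset r l a s) \<and>
          1 / (2 * r) * (1 / (1 + exp (- h * l (fst a)))) * (exp (h * s) - 1) \<le> real (card (Rset r l a s)) \<and>
          (s \<ge> 0 \<longrightarrow> real (card (Rset r l a s)) \<le> 2 * (1 + s / d) * exp (h * s) * (1 / (1 + exp (- h * l (fst a)))))"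
        using fin low up by (simp add: K_def v_def x_def)
    qed
  qed
qed



lemma red_iff: "red a \<eta> \<longleftrightarrow> (\<forall>k. Suc k < length (a # \<eta>) \<longrightarrow> (a # \<eta>) ! Suc k \<noteq> edge_inv ((a # \<eta>) ! k))"
proof (induction \<eta> arbitrary: a)
  case Nil then show ?case by simp
next
  case (Cons e \<eta>)
  have "(\<forall>k. Suc k < length (a # e # \<eta>) \<longrightarrow> (a # e # \<eta>) ! Suc k \<noteq> edge_inv ((a # e # \<eta>) ! k)) \<longleftrightarrow>
        e \<noteq> edge_inv a \<and> (\<forall>k. Suc k < length (e # \<eta>) \<longrightarrow> (e # \<eta>) ! Suc k \<noteq> edge_inv ((e # \<eta>) ! k))"
    (is "?L \<longleftrightarrow> ?R")
  proof
    assume L: ?L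
    show ?R
    proof
      show "e \<noteq> edge_inv a" using L[rule_format, of 0] by simp
      show "\<forall>k. Suc k < length (e # \<eta>) \<longrightarrow> (e # \<eta>) ! Suc k \<noteq> edge_inv ((e # \<eta>) ! k)"
        using L[rule_format, of "Suc k" for k] by simp
    qed
  next
    assume R: ?R
    show ?L
    proof (intro allI impI)
      fix k assume k: "Suc k < length (a # e # \<eta>)"
      show "(a # e # \<eta>) ! Suc k \<noteq> edge_inv ((a # e # \<eta>) ! k)"
        using R k by (cases k) auto
    qed
  qed
  then show ?case using Cons.IH[of e] by simp
qed

lemma red_snoc: "red a (xs @ [c]) \<longleftrightarrow> red a xs \<and> c \<noteq> edge_inv (last (a # xs))"
  by (induction xs arbitrary: a) auto

lemma circuits_sub:
  assumes pos: "\<forall>i\<in>{1..r}. l i > 0"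
  shows "{\<gamma>. based_circuit r \<gamma> \<and> path_length l \<gamma> \<le> t} \<subseteq> (\<Union>e\<in>Eset r. Cons e ` Rset r l e t)"
proof
  fix \<gamma> assume "\<gamma> \<in> {\<gamma>. based_circuit r \<gamma> \<and> path_length l \<gamma> \<le> t}"
  then have bc: "based_circuit r \<gamma>" and pl: "path_length l \<gamma> \<le> t" by auto
  then obtain e \<eta> where g: "\<gamma> = e # \<eta>" unfolding based_circuit_def by (cases \<gamma>) auto
  have E: "set \<gamma> \<subseteq> Eset r" using bc unfolding based_circuit_def Eset_def by auto
  have "red e \<eta>" using bc unfolding based_circuit_def g by (simp add: red_iff)
  moreover have "l (fst e) > 0" using E g pos by (auto simp: Eset_def)
  ultimately have "\<eta> \<in> Rset r l e t" using E pl g by (auto simp: Rset_def)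
  then show "\<gamma> \<in> (\<Union>e\<in>Eset r. Cons e ` Rset r l e t)" using E g by auto
qed

lemma circuits_upper:
  assumes pos: "\<forall>i\<in>{1..r}. l i > 0" and fin: "\<And>e. e \<in> Eset r \<Longrightarrow> finite (Rset r l e t)"
  shows "finite {\<gamma>. based_circuit r \<gamma> \<and> path_length l \<gamma> \<le> t} \<and>
    circuit_count r l t \<le> (\<Sum>e\<in>Eset r. card (Rset r l e t))"
proof -
  have fU: "finite (\<Union>e\<in>Eset r. Cons e ` Rset r l e t)" using fin by auto
  have "card (\<Union>e\<in>Eset r. Cons e ` Rset r l e t) \<le> (\<Sum>e\<in>Eset r. card (Cons e ` Rset r l e t))"
    by (rule card_UN_le) simp
  also have "\<dots> \<le> (\<Sum>e\<in>Eset r. card (Rset r l e t))" by (rule sum_mono) (rule card_image_le, rule fin)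
  finally show ?thesis unfolding circuit_count_def
    using circuits_sub[OF pos] fU by (meson card_mono finite_subset le_trans)
qed

definition closer :: "nat \<Rightarrow> oedge list \<Rightarrow> oedge" where
  "closer r \<eta> = (SOME e. e \<in> Eset r \<and> e \<noteq> edge_inv (last ((1, True) # \<eta>)) \<and> e \<noteq> edge_inv (1, True))"

lemma closer:
  assumes "r \<ge> 2"
  shows "closer r \<eta> \<in> Eset r \<and> closer r \<eta> \<noteq> edge_inv (last ((1, True) # \<eta>)) \<and> closer r \<eta> \<noteq> edge_inv (1, True)"
  unfolding closer_def
proof (rule someI_ex)
  let ?p = "edge_inv (last ((1, True) # \<eta>))" and ?q = "edge_inv (1::nat, True)"
  have "\<exists>e\<in>{(1, True), (1, False), (2, True)}. e \<noteq> ?p \<and> e \<noteq> ?q" by (auto simp: edge_inv_def)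
  moreover have "{(1, True), (1, False), (2::nat, True)} \<subseteq> Eset r" using assms by (auto simp: Eset_def)
  ultimately show "\<exists>e. e \<in> Eset r \<and> e \<noteq> ?p \<and> e \<noteq> ?q" by blast
qed

lemma circuits_lower:
  assumes r: "r \<ge> 2" and L: "\<forall>i\<in>{1..r}. l i \<le> L"
    and finC: "finite {\<gamma>. based_circuit r \<gamma> \<and> path_length l \<gamma> \<le> t + 2 * L}"
  shows "card (Rset r l (1, True) t) \<le> circuit_count r l (t + 2 * L)"
proof -
  let ?f = "\<lambda>\<eta>. (1, True) # \<eta> @ [closer r \<eta>]"
  have inj: "inj_on ?f (Rset r l (1, True) t)" by (rule inj_onI) simp
  have sub: "?f ` Rset r l (1, True) t \<subseteq> {\<gamma>. based_circuit r \<gamma> \<and> path_length l \<gamma> \<le> t + 2 * L}"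
  proof clarify
    fix \<eta> assume "\<eta> \<in> Rset r l (1, True) t"
    then have red: "red (1, True) \<eta>" and E: "set \<eta> \<subseteq> Eset r" and pl: "path_length l \<eta> \<le> t"
      by (auto simp: Rset_def)
    note c = closer[OF r, of \<eta>]
    have "red (1, True) (\<eta> @ [closer r \<eta>])" using red c by (simp add: red_snoc)
    then have R: "\<forall>k. Suc k < length ((1, True) # \<eta> @ [closer r \<eta>]) \<longrightarrow> ((1, True) # \<eta> @ [closer r \<eta>]) ! Suc k \<noteq> edge_inv (((1, True) # \<eta> @ [closer r \<eta>]) ! k)"
      using red_iff[of "(1, True)" "\<eta> @ [closer r \<eta>]"] by blast
    have "based_circuit r ((1, True) # \<eta> @ [closer r \<eta>])"
      unfolding based_circuit_def using E c r R by (auto simp: Eset_def)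
    moreover have "l 1 \<le> L" "l (fst (closer r \<eta>)) \<le> L" using L c r by (auto simp: Eset_def)
    ultimately show "based_circuit r ((1, True) # \<eta> @ [closer r \<eta>]) \<and>
       path_length l ((1, True) # \<eta> @ [closer r \<eta>]) \<le> t + 2 * L" using pl by simp
  qed
  have "card (Rset r l (1, True) t) = card (?f ` Rset r l (1, True) t)" using inj by (simp add: card_image)
  also have "\<dots> \<le> circuit_count r l (t + 2 * L)" unfolding circuit_count_def by (rule card_mono[OF finC sub])
  finally show ?thesis .
qed



lemma entropy_eq:
  fixes r :: nat and l :: "nat \<Rightarrow> real" and h :: real
  assumes r2: "r \<ge> 2" and pos: "\<forall>i\<in>{1..r}. l i > 0" and h: "h > 0"
    and hyp: "(\<Sum>k\<in>{1..r}. 2 * exp (- h * l k) / (1 + exp (- h * l k))) = 1"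
  shows "rose_entropy r l = h"
proof -
  have ne: "l ` {1..r} \<noteq> {}" using r2 by auto
  define d where "d = Min (l ` {1..r})"
  define L where "L = Max (l ` {1..r})"
  have d: "d > 0" using Min_in[OF _ ne] pos by (auto simp: d_def)
  have dle: "\<forall>i\<in>{1..r}. d \<le> l i" by (simp add: d_def)
  have Lge: "\<forall>i\<in>{1..r}. l i \<le> L" by (simp add: L_def)
  have r1: "r \<ge> 1" using r2 by simp
  define K where "K = 1 / (2 * real r)"
  define v1 where "v1 = 1 / (1 + exp (- h * l (fst (1::nat, True))))"
  define B where "B = exp (- (2 * h * L))"
  define N where "N t = real (circuit_count r l t)" for t
  note bd = bounds[OF pos r1 d dle h hyp]
  have a1: "(1::nat, True) \<in> Eset r" using r1 by (simp add: Eset_def)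
  have vle1: "1 / (1 + exp (- h * l (fst a))) \<le> (1::real)" for a
    by (simp add: add_pos_pos)
  have up: "N t \<le> 4 * real r * (1 + t / d) * exp (h * t)" and finC: "finite {\<gamma>. based_circuit r \<gamma> \<and> path_length l \<gamma> \<le> t}"
    if t: "t \<ge> 0" for t
  proof -
    have cu: "finite {\<gamma>. based_circuit r \<gamma> \<and> path_length l \<gamma> \<le> t} \<and>
      circuit_count r l t \<le> (\<Sum>e\<in>Eset r. card (Rset r l e t))"
      using circuits_upper[OF pos, of t] bd[of t] by blast
    then show "finite {\<gamma>. based_circuit r \<gamma> \<and> path_length l \<gamma> \<le> t}" by blast
    have "N t \<le> (\<Sum>e\<in>Eset r. real (card (Rset r l e t)))"
      using cu unfolding N_def by (metis of_nat_le_iff of_nat_sum)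
    also have "\<dots> \<le> (\<Sum>e\<in>Eset r. 2 * (1 + t / d) * exp (h * t))"
    proof (rule sum_mono)
      fix e assume e: "e \<in> Eset r"
      have "real (card (Rset r l e t)) \<le> 2 * (1 + t / d) * exp (h * t) * (1 / (1 + exp (- h * l (fst e))))"
        using bd[of t] e t by blast
      also have "\<dots> \<le> 2 * (1 + t / d) * exp (h * t) * 1"
        using t d by (intro mult_left_mono vle1) auto
      finally show "real (card (Rset r l e t)) \<le> 2 * (1 + t / d) * exp (h * t)" by simp
    qed
    also have "\<dots> = 4 * real r * (1 + t / d) * exp (h * t)" by (simp add: card_Eset)
    finally show "N t \<le> 4 * real r * (1 + t / d) * exp (h * t)" .
  qed
  have finC': "finite {\<gamma>. based_circuit r \<gamma> \<and> path_length l \<gamma> \<le> t}" for t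
  proof (cases "t \<ge> 0")
    case True then show ?thesis by (rule finC)
  next
    case False
    then have "{\<gamma>. based_circuit r \<gamma> \<and> path_length l \<gamma> \<le> t} \<subseteq> {\<gamma>. based_circuit r \<gamma> \<and> path_length l \<gamma> \<le> 0}" by auto
    then show ?thesis using finC[of 0] finite_subset by auto
  qed
  have low: "K * v1 * (B * exp (h * t) - 1) \<le> N t" for t
  proof -
    have "K * v1 * (exp (h * (t - 2 * L)) - 1) \<le> real (card (Rset r l (1, True) (t - 2 * L)))"
      using conjunct1[OF conjunct2[OF bspec[OF bd[of "t - 2 * L"] a1]]] unfolding K_def v1_def by simp
    also have "\<dots> \<le> N t" unfolding N_def
      using circuits_lower[OF r2 Lge, of "t - 2 * L"] finC'[of t] by simp
    finally show ?thesis by (simp add: B_def algebra_simps exp_diff exp_minus field_simps)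
  qed
  have Kpos: "K > 0" using r1 by (simp add: K_def)
  have v1pos: "v1 > 0" by (simp add: v1_def add_pos_pos)
  have Bpos: "B > 0" by (simp add: B_def)
  have c4: "4 * real r > 0" using r1 by simp
  have lim1: "((\<lambda>t::real. ln (K * v1 * (B * exp (h * t) - 1)) / t) \<longlongrightarrow> h) at_top"
    using Kpos v1pos Bpos h by real_asymp
  have lim2: "((\<lambda>t::real. ln (4 * real r * (1 + t / d) * exp (h * t)) / t) \<longlongrightarrow> h) at_top"
    using c4 d h by real_asymp
  have ev1: "eventually (\<lambda>t::real. K * v1 * (B * exp (h * t) - 1) \<ge> 1) at_top"
    using Kpos v1pos Bpos h by real_asymp
  have ev2: "eventually (\<lambda>t::real. t > 0) at_top" by real_asymp
  have lim: "((\<lambda>t. ln (N t) / t) \<longlongrightarrow> h) at_top"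
  proof (rule tendsto_sandwich[OF _ _ lim1 lim2])
    show "eventually (\<lambda>t. ln (K * v1 * (B * exp (h * t) - 1)) / t \<le> ln (N t) / t) at_top"
      using ev1 ev2
    proof eventually_elim
      case (elim t)
      then have "ln (K * v1 * (B * exp (h * t) - 1)) \<le> ln (N t)" using low[of t] by (intro ln_mono) auto
      then show ?case using elim by (intro divide_right_mono) auto
    qed
    show "eventually (\<lambda>t. ln (N t) / t \<le> ln (4 * real r * (1 + t / d) * exp (h * t)) / t) at_top"
      using ev1 ev2
    proof eventually_elim
      case (elim t)
      then have "ln (N t) \<le> ln (4 * real r * (1 + t / d) * exp (h * t))" using low[of t] up[of t] by (intro ln_mono) auto
      then show ?case using elim by (intro divide_right_mono) auto
    qed
  qed
  show ?thesis unfolding rose_entropy_def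
    by (rule tendsto_Lim) (use lim in \<open>simp_all add: N_def\<close>)
qed

lemma exists_h:
  fixes r :: nat and l :: "nat \<Rightarrow> real"
  assumes r2: "r \<ge> 2" and pos: "\<forall>i\<in>{1..r}. l i > 0"
  shows "\<exists>h>0. (\<Sum>k\<in>{1..r}. 2 * exp (- h * l k) / (1 + exp (- h * l k))) = 1"
proof -
  define \<phi> where "\<phi> y = (\<Sum>k\<in>{1..r}. 2 * exp (- y * l k) / (1 + exp (- y * l k)))" for y
  have ne: "l ` {1..r} \<noteq> {}" using r2 by auto
  define d where "d = Min (l ` {1..r})"
  have d: "d > 0" using Min_in[OF _ ne] pos by (auto simp: d_def)
  have dle: "\<forall>i\<in>{1..r}. d \<le> l i" by (simp add: d_def)
  define H where "H = ln (4 * real r) / d"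
  have Hpos: "H > 0" using r2 d by (simp add: H_def)
  have phi0: "\<phi> 0 = real r" by (simp add: \<phi>_def)
  have "\<phi> H \<le> (\<Sum>k\<in>{1..r}. 2 * exp (- H * d))"
    unfolding \<phi>_def
  proof (rule sum_mono)
    fix k assume k: "k \<in> {1..r}"
    have "2 * exp (- H * l k) / (1 + exp (- H * l k)) \<le> 2 * exp (- H * l k)"
      by (simp add: divide_le_eq add_pos_pos)
    also have "\<dots> \<le> 2 * exp (- H * d)" using dle k Hpos by (simp add: mult_left_mono)
    finally show "2 * exp (- H * l k) / (1 + exp (- H * l k)) \<le> 2 * exp (- H * d)" .
  qed
  also have "\<dots> = 2 * real r * exp (- H * d)" by simp
  also have "exp (- H * d) = 1 / (4 * real r)" using d r2 by (simp add: H_def exp_minus inverse_eq_divide)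
  finally have phiH: "\<phi> H \<le> 1 / 2" using r2 by simp
  have cont: "\<forall>x. 0 \<le> x \<and> x \<le> H \<longrightarrow> isCont \<phi> x"
    unfolding \<phi>_def by (intro allI impI continuous_intros) (auto intro: add_pos_pos simp: add_nonneg_eq_0_iff)
  obtain h where "0 \<le> h" "h \<le> H" "\<phi> h = 1"
    using IVT2[of \<phi> H 1 0, OF _ _ _ cont] phiH phi0 r2 Hpos by auto
  moreover have "h \<noteq> 0" using \<open>\<phi> h = 1\<close> phi0 r2 by auto
  ultimately have "h > 0" "\<phi> h = 1" by auto
  then show ?thesis unfolding \<phi>_def by blast
qed

theorem mainTheorem12:
  fixes r :: nat and l :: "nat \<Rightarrow> real"
  assumes "r \<ge> 2"
    and "\<forall>i\<in>{1..r}. l i > 0"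
  shows "rose_entropy r l = 1 \<longleftrightarrow> Fbar r l = 0"
proof
  assume e: "rose_entropy r l = 1"
  obtain h where h: "h > 0" "(\<Sum>k\<in>{1..r}. 2 * exp (- h * l k) / (1 + exp (- h * l k))) = 1"
    using exists_h[OF assms] by blast
  have "h = 1" using entropy_eq[OF assms h] e by simp
  then show "Fbar r l = 0" using h(2) Fbar_iff[OF assms(2)] by simp
next
  assume "Fbar r l = 0"
  then have "(\<Sum>k\<in>{1..r}. 2 * exp (- 1 * l k) / (1 + exp (- 1 * l k))) = 1"
    using Fbar_iff[OF assms(2)] by simp
  then show "rose_entropy r l = 1" using entropy_eq[OF assms, of 1] by simp
qed

end
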